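(* Let $(u_S,u_R)$ be an environment satisfying scant-indifferences. If $(\sigma,\rho)$ is a cheap-talk equilibrium with $U_S(\sigma,\rho)$ equal to the persuasion payoff and $\rho$ is pure-on-path, then there exist a partitional messaging strategy $\hat\sigma$ and a pure action strategy $\hat\rho$ such that $|M_{\hat\sigma}|\le|A|$, $(\hat\sigma,\hat\rho)$ is a cheap-talk equilibrium, and $U_S(\hat\sigma,\hat\rho)$ equals the persuasion payoff.
   Context: $A=\{a_1,\dots,a_{|A|}\}$ and $\Omega$ are finite nonempty sets, $\mu_0$ a prior on $\Omega$ with $\mu_0(\omega)>0$ for all $\omega$, $M$ a finite message set with $|M|>\max\{|\Omega|,|A|\}$. An environment is a pair of functions $u_S,u_R:A\times\Omega\to[0,1]$. A messaging strategy is $\sigma:\Omega\to\Delta M$; an action strategy is $\rho:M\to\Delta A$; $\rho$ is pure if each $\rho(\cdot|m)$ is degenerate, and pure-on-path (given $\sigma$) if $\rho(\cdot|m)$ is degenerate for every $m\in M_\sigma=\{m:\sigma(m|\omega)>0\text{ for some }\omega\}$. $U_i(\sigma,\rho)=\sum_{\omega,m,a}\mu_0(\omega)\sigma(m|\omega)\rho(a|m)u_i(a,\omega)$. $(\sigma,\rho)$ is S-BR if $\sigma\in\arg\max_{\sigma'}U_S(\sigma',\rho)$, R-BR if $\rho\in\arg\max_{\rho'}U_R(\sigma,\rho')$; a cheap-talk equilibrium is both. The persuasion payoff is the maximum of $U_S$ over R-BR profiles. $\sigma$ is partitional if for every $\omega$ some $m$ has $\sigma(m|\omega)=1$. Scant-indifferences: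 with $\mathbf u_S(a)=u_S(a,\cdot)\in\mathbb R^{|\Omega|}$, $\mathbf u_R(a)=u_R(a,\cdot)$, for each $i$ the expanded-indifference matrix $T^i$ has $|\Omega|$ columns and rows $\mathbf u_S(a_j)-\mathbf u_S(a_i)$ ($j\ne i$), $\mathbf u_R(a_j)-\mathbf u_R(a_i)$ ($j\ne i$), and the rows of the $|\Omega|\times|\Omega|$ identity; the environment satisfies scant-indifferences if for each $i$ every matrix obtained from $T^i$ by deleting some rows has full rank. *)

theory Defs
  imports "HOL-Analysis.Analysis" "HOL-Probability.Probability_Mass_Function"
begin

text \<open>A messaging strategy is 'w \<Rightarrow> 'm pmf, an action strategy is 'm \<Rightarrow> 'a pmf.\<close>

definition environment :: "('a \<Rightarrow> 'w \<Rightarrow> real) \<Rightarrow> ('a \<Rightarrow> 'w \<Rightarrow> real) \<Rightarrow> bool" where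
  "environment uS uR \<longleftrightarrow> (\<forall>a w. 0 \<le> uS a w \<and> uS a w \<le> 1 \<and> 0 \<le> uR a w \<and> uR a w \<le> 1)"

definition payoff :: "'w pmf \<Rightarrow> ('a \<Rightarrow> 'w \<Rightarrow> real) \<Rightarrow> ('w::finite \<Rightarrow> 'm::finite pmf)
    \<Rightarrow> ('m \<Rightarrow> 'a::finite pmf) \<Rightarrow> real" where
  "payoff mu0 u \<sigma> \<rho> =
     (\<Sum>w\<in>UNIV. \<Sum>m\<in>UNIV. \<Sum>a\<in>UNIV. pmf mu0 w * pmf (\<sigma> w) m * pmf (\<rho> m) a * u a w)"

definition S_BR :: "'w pmf \<Rightarrow> ('a \<Rightarrow> 'w \<Rightarrow> real) \<Rightarrow> ('w::finite \<Rightarrow> 'm::finite pmf)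
    \<Rightarrow> ('m \<Rightarrow> 'a::finite pmf) \<Rightarrow> bool" where
  "S_BR mu0 uS \<sigma> \<rho> \<longleftrightarrow> (\<forall>\<sigma>'. payoff mu0 uS \<sigma>' \<rho> \<le> payoff mu0 uS \<sigma> \<rho>)"

definition R_BR :: "'w pmf \<Rightarrow> ('a \<Rightarrow> 'w \<Rightarrow> real) \<Rightarrow> ('w::finite \<Rightarrow> 'm::finite pmf)
    \<Rightarrow> ('m \<Rightarrow> 'a::finite pmf) \<Rightarrow> bool" where
  "R_BR mu0 uR \<sigma> \<rho> \<longleftrightarrow> (\<forall>\<rho>'. payoff mu0 uR \<sigma> \<rho>' \<le> payoff mu0 uR \<sigma> \<rho>)"

definition cheap_talk_eq :: "'w pmf \<Rightarrow> ('a \<Rightarrow> 'w \<Rightarrow> real) \<Rightarrow> ('a \<Rightarrow> 'w \<Rightarrow> real)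
    \<Rightarrow> ('w::finite \<Rightarrow> 'm::finite pmf) \<Rightarrow> ('m \<Rightarrow> 'a::finite pmf) \<Rightarrow> bool" where
  "cheap_talk_eq mu0 uS uR \<sigma> \<rho> \<longleftrightarrow> S_BR mu0 uS \<sigma> \<rho> \<and> R_BR mu0 uR \<sigma> \<rho>"

text \<open>Persuasion payoff: the maximum of U_S over R-BR profiles (written as a supremum;
  the set is nonempty and bounded, and the maximum is attained).\<close>
definition persuasion_payoff :: "'w pmf \<Rightarrow> ('a \<Rightarrow> 'w \<Rightarrow> real) \<Rightarrow> ('a \<Rightarrow> 'w \<Rightarrow> real)
    \<Rightarrow> ('w::finite \<Rightarrow> 'm::finite pmf) itself \<Rightarrow> ('m \<Rightarrow> 'a::finite pmf) itself \<Rightarrow> real" where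
  "persuasion_payoff mu0 uS uR _ _ =
     Sup {payoff mu0 uS \<sigma> \<rho> | (\<sigma> :: 'w \<Rightarrow> 'm pmf) (\<rho> :: 'm \<Rightarrow> 'a pmf). R_BR mu0 uR \<sigma> \<rho>}"

definition on_path :: "('w::finite \<Rightarrow> 'm pmf) \<Rightarrow> 'm set" where
  "on_path \<sigma> = {m. \<exists>w. pmf (\<sigma> w) m > 0}"

definition pure_strategy :: "('m \<Rightarrow> 'a pmf) \<Rightarrow> bool" where
  "pure_strategy \<rho> \<longleftrightarrow> (\<forall>m. \<exists>a. \<rho> m = return_pmf a)"

definition pure_on_path :: "('w::finite \<Rightarrow> 'm pmf) \<Rightarrow> ('m \<Rightarrow> 'a pmf) \<Rightarrow> bool" where
  "pure_on_path \<sigma> \<rho> \<longleftrightarrow> (\<forall>m\<in>on_path \<sigma>. \<exists>a. \<rho> m = return_pmf a)"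

definition partitional :: "('w \<Rightarrow> 'm pmf) \<Rightarrow> bool" where
  "partitional \<sigma> \<longleftrightarrow> (\<forall>w. \<exists>m. pmf (\<sigma> w) m = 1)"

text \<open>Rows of the expanded-indifference matrix T^i, indexed by
  Inl (j, True)  : u_S(a_j) - u_S(a_i),  j \<noteq> i
  Inl (j, False) : u_R(a_j) - u_R(a_i),  j \<noteq> i
  Inr w          : the w-th row of the identity.\<close>
fun T_row :: "('a \<Rightarrow> 'w \<Rightarrow> real) \<Rightarrow> ('a \<Rightarrow> 'w \<Rightarrow> real) \<Rightarrow> 'a
    \<Rightarrow> ('a \<times> bool) + 'w \<Rightarrow> real ^ ('w::finite)" where
  "T_row uS uR i (Inl (j, True)) = (\<chi> w. uS j w - uS i w)"
| "T_row uS uR i (Inl (j, False)) = (\<chi> w. uR j w - uR i w)"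
| "T_row uS uR i (Inr w) = axis w 1"

definition T_rows :: "'a \<Rightarrow> (('a \<times> bool) + 'w) set" where
  "T_rows i = {Inl (j, b) | j b. j \<noteq> i} \<union> range Inr"

text \<open>A matrix whose rows are the family (T_row i r) for r in R has full rank iff its rank
  (the dimension of its row space) equals min (number of rows) (number of columns).\<close>
definition scant_indifferences :: "('a \<Rightarrow> 'w \<Rightarrow> real) \<Rightarrow> ('a \<Rightarrow> 'w::finite \<Rightarrow> real) \<Rightarrow> bool" where
  "scant_indifferences uS uR \<longleftrightarrow>
     (\<forall>i. \<forall>R \<subseteq> T_rows i.
        dim (span (T_row uS uR i ` R)) = min (card R) CARD('w))"

end

theory Submission
  imports Defs
begin

lemma scant_strict:
  fixes uS uR :: "'a \<Rightarrow> 'w::finite \<Rightarrow> real"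
  assumes scant: "scant_indifferences uS uR" and ji: "j \<noteq> i"
  shows "uS j w \<noteq> uS i w"
proof
  assume eq: "uS j w = uS i w"
  let ?R = "insert (Inl (j,True)) (Inr ` (UNIV - {w}))"
  have sub: "?R \<subseteq> T_rows i" using ji by (auto simp: T_rows_def)
  have card: "card ?R = CARD('w)"
  proof -
    have "card ?R = Suc (card (Inr ` (UNIV - {w}) :: (('a \<times> bool) + 'w) set))"
      by (rule card_insert_disjoint) auto
    also have "card (Inr ` (UNIV - {w}) :: (('a \<times> bool) + 'w) set) = card (UNIV - {w})"
      by (rule card_image) (simp add: inj_on_def)
    also have "card (UNIV - {w}) = CARD('w) - 1" by (simp add: card_Diff_singleton)
    finally show ?thesis by (simp add: Suc_diff_1 finite_UNIV_card_ge_0)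
  qed
  have "dim (span (T_row uS uR i ` ?R)) = CARD('w)"
  proof -
    have "dim (span (T_row uS uR i ` ?R)) = min (card ?R) CARD('w)"
      using scant sub unfolding scant_indifferences_def by blast
    then show ?thesis using card by simp
  qed
  then have "dim (T_row uS uR i ` ?R) = DIM(real^'w)" by (simp only: dim_span DIM_cart DIM_real mult_1_right)
  then have sp: "span (T_row uS uR i ` ?R) = UNIV" using dim_eq_full by blast
  have "T_row uS uR i ` ?R \<subseteq> {x. x $ w = 0}"
    using eq by (auto simp: axis_def)
  moreover have "subspace {x::real^'w. x $ w = 0}" by (simp add: subspace_def)
  ultimately have "span (T_row uS uR i ` ?R) \<subseteq> {x. x $ w = 0}" by (rule span_minimal)
  then have "axis w (1::real) \<in> {x. x $ w = 0}" using sp by blast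
  then show False by (simp add: axis_def)
qed

lemma sum_ret: "(\<Sum>x\<in>UNIV. pmf (return_pmf b) x * g x) = g (b::'b::finite)"
  by (simp add: pmf_return indicator_def)

lemma sum_pmf_univ: "(\<Sum>m\<in>(UNIV::'m::finite set). pmf p m) = 1"
  by (rule sum_pmf_eq_1) auto

lemma payoff_alt: "payoff mu0 u \<sigma> \<rho> = (\<Sum>w\<in>UNIV. pmf mu0 w * (\<Sum>m\<in>UNIV. pmf (\<sigma> w) m * (\<Sum>a\<in>UNIV. pmf (\<rho> m) a * u a w)))"
  unfolding payoff_def by (simp add: sum_distrib_left mult.assoc)

lemma S_pointwise:
  fixes mu0 :: "'w::finite pmf" and uS :: "'a::finite \<Rightarrow> 'w \<Rightarrow> real"
    and \<sigma> :: "'w \<Rightarrow> 'm::finite pmf" and \<rho> :: "'m \<Rightarrow> 'a pmf"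
  assumes prior: "\<forall>w. pmf mu0 w > 0" and br: "S_BR mu0 uS \<sigma> \<rho>"
    and pos: "pmf (\<sigma> w) m > 0"
  shows "(\<Sum>a\<in>UNIV. pmf (\<rho> m') a * uS a w) \<le> (\<Sum>a\<in>UNIV. pmf (\<rho> m) a * uS a w)"
proof -
  define V where "V w m = (\<Sum>a\<in>UNIV. pmf (\<rho> m) a * uS a w)" for w m
  define Mx where "Mx w = Max (range (V w))" for w
  have Vle: "V w m \<le> Mx w" for w m unfolding Mx_def by simp
  have "\<exists>m. V w m = Mx w" for w unfolding Mx_def
  proof -
    have "Max (range (V w)) \<in> range (V w)" by (rule Max_in) auto
    then show "\<exists>m. V w m = Max (range (V w))" by (metis imageE)
  qed
  then obtain best where best: "\<And>w. V w (best w) = Mx w" by metis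
  define E where "E w = (\<Sum>m\<in>UNIV. pmf (\<sigma> w) m * V w m)" for w
  have EMx: "E w \<le> Mx w" for w
  proof -
    have "E w \<le> (\<Sum>m\<in>UNIV. pmf (\<sigma> w) m * Mx w)"
      unfolding E_def by (rule sum_mono) (simp add: Vle mult_left_mono)
    also have "\<dots> = Mx w" by (simp add: sum_distrib_right[symmetric] sum_pmf_univ)
    finally show ?thesis .
  qed
  have p1: "payoff mu0 uS \<sigma> \<rho> = (\<Sum>w\<in>UNIV. pmf mu0 w * E w)"
    by (simp add: payoff_alt E_def V_def)
  have p2: "payoff mu0 uS (\<lambda>w. return_pmf (best w)) \<rho> = (\<Sum>w\<in>UNIV. pmf mu0 w * Mx w)"
    by (simp add: payoff_alt sum_ret best[symmetric] V_def)
  have "(\<Sum>w\<in>UNIV. pmf mu0 w * Mx w) \<le> (\<Sum>w\<in>UNIV. pmf mu0 w * E w)"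
    using br p1 p2 unfolding S_BR_def by metis
  then have "(\<Sum>w\<in>UNIV. pmf mu0 w * (Mx w - E w)) \<le> 0"
    by (simp add: right_diff_distrib sum_subtractf)
  moreover have nn: "\<forall>w\<in>UNIV. 0 \<le> pmf mu0 w * (Mx w - E w)" using EMx by simp
  ultimately have "(\<Sum>w\<in>UNIV. pmf mu0 w * (Mx w - E w)) = 0"
    by (meson antisym sum_nonneg)
  then have "pmf mu0 w * (Mx w - E w) = 0" using nn by (simp add: sum_nonneg_eq_0_iff)
  then have "E w = Mx w" using prior by (metis less_irrefl mult_eq_0_iff eq_iff_diff_eq_0)
  then have "(\<Sum>m\<in>UNIV. pmf (\<sigma> w) m * (Mx w - V w m)) = 0"
    by (simp add: E_def right_diff_distrib sum_subtractf sum_distrib_right[symmetric] sum_pmf_univ)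
  moreover have nn2: "\<forall>m\<in>UNIV. 0 \<le> pmf (\<sigma> w) m * (Mx w - V w m)" using Vle by simp
  ultimately have "pmf (\<sigma> w) m * (Mx w - V w m) = 0" by (simp add: sum_nonneg_eq_0_iff)
  then have "V w m = Mx w" using pos by simp
  then show ?thesis using Vle[of w m'] unfolding V_def by simp
qed

theorem lemma5:
  fixes mu0 :: "'w::finite pmf"
    and uS uR :: "'a::finite \<Rightarrow> 'w \<Rightarrow> real"
    and \<sigma> :: "'w \<Rightarrow> 'm::finite pmf"
    and \<rho> :: "'m \<Rightarrow> 'a pmf"
  assumes prior: "\<forall>w. pmf mu0 w > 0"
    and msgs: "CARD('m) > max CARD('w) CARD('a)"
    and env: "environment uS uR"
    and scant: "scant_indifferences uS uR"
    and eq: "cheap_talk_eq mu0 uS uR \<sigma> \<rho>"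
    and opt: "payoff mu0 uS \<sigma> \<rho> = persuasion_payoff mu0 uS uR TYPE('w \<Rightarrow> 'm pmf) TYPE('m \<Rightarrow> 'a pmf)"
    and pop: "pure_on_path \<sigma> \<rho>"
  shows "\<exists>(\<sigma>h :: 'w \<Rightarrow> 'm pmf) (\<rho>h :: 'm \<Rightarrow> 'a pmf).
           partitional \<sigma>h \<and> pure_strategy \<rho>h \<and> card (on_path \<sigma>h) \<le> CARD('a) \<and>
           cheap_talk_eq mu0 uS uR \<sigma>h \<rho>h \<and>
           payoff mu0 uS \<sigma>h \<rho>h = persuasion_payoff mu0 uS uR TYPE('w \<Rightarrow> 'm pmf) TYPE('m \<Rightarrow> 'a pmf)"
proof -
  have eqS: "S_BR mu0 uS \<sigma> \<rho>" and eqR: "R_BR mu0 uR \<sigma> \<rho>"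
    using eq by (auto simp: cheap_talk_eq_def)
  have "card (UNIV::'a set) \<le> card (UNIV::'m set)" using msgs by simp
  then obtain f :: "'a \<Rightarrow> 'm" where injf: "inj f"
    using card_le_inj[of "UNIV::'a set" "UNIV::'m set"] by auto
  have "\<exists>m. pmf (\<sigma> w) m > 0" for w
  proof -
    obtain m where "m \<in> set_pmf (\<sigma> w)" using set_pmf_not_empty by fast
    then show ?thesis by (metis pmf_positive)
  qed
  then obtain m0 where m0: "\<And>w. pmf (\<sigma> w) (m0 w) > 0" by metis
  have "\<exists>b. \<rho> (m0 w) = return_pmf b" for w
    using pop m0[of w] unfolding pure_on_path_def on_path_def by blast
  then obtain a where a: "\<And>w. \<rho> (m0 w) = return_pmf (a w)" by metis
  have key: "\<rho> m = return_pmf (a w)" if pm: "pmf (\<sigma> w) m > 0" for w m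
  proof -
    obtain b where b: "\<rho> m = return_pmf b"
      using pop pm unfolding pure_on_path_def on_path_def by blast
    have "(\<Sum>x\<in>UNIV. pmf (\<rho> (m0 w)) x * uS x w) \<le> (\<Sum>x\<in>UNIV. pmf (\<rho> m) x * uS x w)"
      by (rule S_pointwise[OF prior eqS pm])
    moreover have "(\<Sum>x\<in>UNIV. pmf (\<rho> m) x * uS x w) \<le> (\<Sum>x\<in>UNIV. pmf (\<rho> (m0 w)) x * uS x w)"
      by (rule S_pointwise[OF prior eqS m0])
    ultimately have "uS b w = uS (a w) w" using a b by (simp add: sum_ret)
    then have "b = a w" using scant_strict[OF scant] by metis
    then show ?thesis using b by simp
  qed
  have Sle: "uS (a w') w \<le> uS (a w) w" for w w'
    using S_pointwise[OF prior eqS m0[of w], of "m0 w'"] a by (simp add: sum_ret)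
  define g where "g m = (if m \<in> f ` range a then inv f m else a undefined)" for m
  have gfa: "g (f (a w)) = a w" for w by (simp add: g_def injf)
  have grange: "\<exists>w'. g m = a w'" for m
    by (cases "m \<in> f ` range a") (auto simp: g_def injf)
  define \<sigma>h where "\<sigma>h w = return_pmf (f (a w))" for w
  define \<rho>h where "\<rho>h m = return_pmf (g m)" for m
  have pay: "payoff mu0 u \<sigma>h \<rho>h = payoff mu0 u \<sigma> \<rho>" for u
  proof -
    have "(\<Sum>m\<in>UNIV. pmf (\<sigma> w) m * (\<Sum>x\<in>UNIV. pmf (\<rho> m) x * u x w)) = u (a w) w" for w
    proof -
      have "(\<Sum>m\<in>UNIV. pmf (\<sigma> w) m * (\<Sum>x\<in>UNIV. pmf (\<rho> m) x * u x w))
          = (\<Sum>m\<in>UNIV. pmf (\<sigma> w) m * u (a w) w)"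
      proof (rule sum.cong)
        fix m
        show "pmf (\<sigma> w) m * (\<Sum>x\<in>UNIV. pmf (\<rho> m) x * u x w) = pmf (\<sigma> w) m * u (a w) w"
        proof (cases "pmf (\<sigma> w) m > 0")
          case True then show ?thesis using key[OF True] by (simp add: sum_ret)
        next
          case False then have "pmf (\<sigma> w) m = 0" using pmf_nonneg[of "\<sigma> w" m] by linarith
          then show ?thesis by simp
        qed
      qed simp
      also have "\<dots> = u (a w) w" by (simp add: sum_distrib_right[symmetric] sum_pmf_univ)
      finally show ?thesis .
    qed
    then show ?thesis by (simp add: payoff_alt \<sigma>h_def \<rho>h_def sum_ret gfa)
  qed
  have SBR: "S_BR mu0 uS \<sigma>h \<rho>h"
    unfolding S_BR_def
  proof
    fix \<sigma>' :: "'w \<Rightarrow> 'm pmf"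
    have "payoff mu0 uS \<sigma>' \<rho>h = (\<Sum>w\<in>UNIV. pmf mu0 w * (\<Sum>m\<in>UNIV. pmf (\<sigma>' w) m * uS (g m) w))"
      by (simp add: payoff_alt \<rho>h_def sum_ret)
    also have "\<dots> \<le> (\<Sum>w\<in>UNIV. pmf mu0 w * (\<Sum>m\<in>UNIV. pmf (\<sigma>' w) m * uS (a w) w))"
    proof (rule sum_mono, rule mult_left_mono, rule sum_mono, rule mult_left_mono)
      fix w m
      obtain w' where "g m = a w'" using grange by blast
      then show "uS (g m) w \<le> uS (a w) w" using Sle by simp
    qed simp_all
    also have "\<dots> = payoff mu0 uS \<sigma>h \<rho>h"
      by (simp add: payoff_alt \<sigma>h_def \<rho>h_def sum_ret gfa sum_distrib_right[symmetric] sum_pmf_univ)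
    finally show "payoff mu0 uS \<sigma>' \<rho>h \<le> payoff mu0 uS \<sigma>h \<rho>h" .
  qed
  have RBR: "R_BR mu0 uR \<sigma>h \<rho>h"
    unfolding R_BR_def
  proof
    fix \<rho>' :: "'m \<Rightarrow> 'a pmf"
    define h where "h m = (SOME b. \<rho> m = return_pmf b)" for m
    have hk: "h m = a w" if "pmf (\<sigma> w) m > 0" for w m
      using key[OF that] unfolding h_def by simp
    define C where "C w = (\<Sum>x\<in>UNIV. pmf (\<rho>' (f (a w))) x * uR x w)" for w
    have "payoff mu0 uR \<sigma>h \<rho>' = (\<Sum>w\<in>UNIV. pmf mu0 w * C w)"
      by (simp add: payoff_alt \<sigma>h_def sum_ret C_def)
    also have "\<dots> = payoff mu0 uR \<sigma> (\<lambda>m. \<rho>' (f (h m)))"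
    proof -
      have "(\<Sum>m\<in>UNIV. pmf (\<sigma> w) m * (\<Sum>x\<in>UNIV. pmf (\<rho>' (f (h m))) x * uR x w)) = C w" for w
      proof -
        have "(\<Sum>m\<in>UNIV. pmf (\<sigma> w) m * (\<Sum>x\<in>UNIV. pmf (\<rho>' (f (h m))) x * uR x w))
            = (\<Sum>m\<in>UNIV. pmf (\<sigma> w) m * C w)"
        proof (rule sum.cong)
          fix m
          show "pmf (\<sigma> w) m * (\<Sum>x\<in>UNIV. pmf (\<rho>' (f (h m))) x * uR x w) = pmf (\<sigma> w) m * C w"
          proof (cases "pmf (\<sigma> w) m > 0")
            case True then show ?thesis using hk[OF True] by (simp add: C_def)
          next
            case False then have "pmf (\<sigma> w) m = 0" using pmf_nonneg[of "\<sigma> w" m] by linarith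
            then show ?thesis by simp
          qed
        qed simp
        also have "\<dots> = C w" by (simp add: sum_distrib_right[symmetric] sum_pmf_univ)
        finally show ?thesis .
      qed
      then show ?thesis by (simp add: payoff_alt)
    qed
    also have "\<dots> \<le> payoff mu0 uR \<sigma> \<rho>" using eqR unfolding R_BR_def by blast
    also have "\<dots> = payoff mu0 uR \<sigma>h \<rho>h" using pay by simp
    finally show "payoff mu0 uR \<sigma>h \<rho>' \<le> payoff mu0 uR \<sigma>h \<rho>h" .
  qed
  have part: "partitional \<sigma>h" unfolding partitional_def \<sigma>h_def by (metis pmf_return indicator_simps(1) singletonI)
  have pure: "pure_strategy \<rho>h" unfolding pure_strategy_def \<rho>h_def by auto
  have op: "on_path \<sigma>h = f ` range a"
    unfolding on_path_def \<sigma>h_def by (auto simp: pmf_return indicator_def split: if_splits)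
  have "card (f ` range a) \<le> CARD('a)"
    by (meson card_image_le card_mono finite order_trans subset_UNIV)
  then have cd: "card (on_path \<sigma>h) \<le> CARD('a)" using op by simp
  show ?thesis
    using part pure cd SBR RBR pay[of uS] opt
    by (auto simp: cheap_talk_eq_def)
qed

end
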